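(* For every integer $n>1$, there exist thresholds $0<\tau_-(n)<\tau_+(n)<\infty$ such that for every $\tau<\tau_-(n)$ (respectively $\tau>\tau_+(n)$), the function $f_{n,\tau}\colon[1,n-1]\to\mathbb{R}$ defined by $f_{n,\tau}(x)=(x+1)\log\big(n-x-1+e^{1/\tau}+xe^{-1/(\tau x)}\big)$ is strictly concave (respectively strictly convex). *)

theory Defs
  imports "HOL-Analysis.Analysis"
begin

definition strict_convex_on :: "real set \<Rightarrow> (real \<Rightarrow> real) \<Rightarrow> bool" where
  "strict_convex_on S f \<longleftrightarrow> convex S \<and>
     (\<forall>x\<in>S. \<forall>y\<in>S. \<forall>t::real. x \<noteq> y \<and> 0 < t \<and> t < 1 \<longrightarrow>
        f ((1 - t) * x + t * y) < (1 - t) * f x + t * f y)"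

definition strict_concave_on :: "real set \<Rightarrow> (real \<Rightarrow> real) \<Rightarrow> bool" where
  "strict_concave_on S f \<longleftrightarrow> strict_convex_on S (\<lambda>x. - f x)"

definition f_fun :: "nat \<Rightarrow> real \<Rightarrow> real \<Rightarrow> real" where
  "f_fun n \<tau> x = (x + 1) * ln (real n - x - 1 + exp (1 / \<tau>) + x * exp (- 1 / (\<tau> * x)))"

end

theory Submission
  imports Defs
begin


lemma c_upper:
  fixes b :: real assumes b: "0 < b" "b \<le> 1/4"
  shows "1 - exp (- b) * (1 + b) \<le> b^2 / 2"
proof -
  obtain t where t: "\<bar>t\<bar> \<le> \<bar>-b\<bar>"
    and e: "exp (-b) = (\<Sum>m<3. ((-b) ^ m) / fact m) + (exp t / fact 3) * (-b) ^ 3"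
    using Maclaurin_exp_le[of "-b" 3] by blast
  have e2: "exp (-b) = 1 - b + b^2/2 - exp t * b^3 / 6"
    using e by (simp add: numeral_3_eq_3 fact_numeral power2_eq_square)
  have "exp t \<le> exp b" using t b by simp
  also have "exp b \<le> 1 + b + b^2" using exp_bound[of b] b by simp
  also have "\<dots> \<le> 2"
  proof -
    have "b^2 \<le> (1/4)^2" using power_mono[of b "1/4" 2] b by simp
    then show ?thesis using b by (simp add: power2_eq_square)
  qed
  finally have et: "exp t \<le> 2" .
  have b3: "b^3 > 0" using b by simp
  have "exp t * b^3 \<le> 2 * b^3" using et b3 by (simp add: mult_right_mono)
  then have "exp (-b) \<ge> 1 - b + b^2/2 - b^3/3" using e2 by simp
  then have "exp (-b) * (1 + b) \<ge> (1 - b + b^2/2 - b^3/3) * (1 + b)"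
    using b by (simp add: mult_right_mono)
  moreover have "(1 - b + b^2/2 - b^3/3) * (1 + b) = 1 - b^2/2 + b^3/6 - b^4/3"
    by (simp add: field_simps power2_eq_square power3_eq_cube power4_eq_xxxx)
  moreover have "b^4/3 \<le> b^3/6"
  proof -
    have "b^4 = b * b^3" by (simp add: power_numeral_reduce)
    also have "\<dots> \<le> (1/2) * b^3" using b b3 by (simp add: mult_right_mono)
    finally show ?thesis by simp
  qed
  ultimately show ?thesis by linarith
qed

lemma c_nonneg:
  fixes b :: real shows "0 \<le> 1 - exp (- b) * (1 + b)"
proof -
  have "1 + b \<le> exp b" by simp
  then have "exp (-b) * (1 + b) \<le> exp (-b) * exp b" by (simp add: mult_left_mono)
  also have "\<dots> = 1" by (simp add: exp_minus)
  finally show ?thesis by simp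
qed

lemma big_b:
  fixes b :: real assumes b: "4 \<le> b"
  shows "exp (- b) * (1 + b + b^2) < 1"
proof -
  have h: "1 + b/2 + (b/2)^2/2 \<le> exp (b/2)" using exp_lower_Taylor_quadratic[of "b/2"] b by simp
  have "exp b = exp (b/2) ^ 2" using exp_double[of "b/2"] by simp
  moreover have "(1 + b/2 + (b/2)^2/2)^2 \<le> exp (b/2) ^ 2"
    using h b by (intro power_mono) (auto simp: power2_eq_square)
  moreover have "(1 + b/2 + (b/2)^2/2)^2 = 1 + b + b^2/2 + b^3/8 + b^4/64"
    by (simp add: algebra_simps power2_eq_square power3_eq_cube power4_eq_xxxx)
  moreover have "b^3/8 + b^4/64 > b^2/2"
  proof -
    have "b^3 = b * b^2" by (simp add: power_numeral_reduce power2_eq_square)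
    moreover have "b * b^2 \<ge> 4 * b^2" using b by (simp add: mult_right_mono)
    moreover have "b^4 > 0" using b by simp
    ultimately show ?thesis by linarith
  qed
  ultimately have "exp b > 1 + b + b^2" by linarith
  then have "exp (-b) * (1 + b + b^2) < exp (-b) * exp b" by simp
  also have "\<dots> = 1" by (simp add: exp_minus)
  finally show ?thesis .
qed

lemma lin_aux: "(P::real) \<le> K * (1/8) \<Longrightarrow> M \<le> G \<Longrightarrow> K * (1/2) \<le> M \<Longrightarrow> 0 < K * (1/2) \<Longrightarrow> 0 < G - P"
  by linarith

lemma convex_core:
  fixes x b u c g :: real
  assumes x: "x \<ge> 1" and b: "b > 0" "b * x \<le> 1/4" and u: "u \<ge> 1 - b"
    and c: "0 \<le> c" "c \<le> b^2/2" and g: "g \<ge> 1"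
  shows "g * ((x+1) * u * b^2 / x - 2 * c) - (x+1) * c^2 > 0"
proof -
  have x0: "x > 0" using x by simp
  have bl: "b \<le> 1/4" using b x by (smt (verit) mult_left_mono mult.commute mult_cancel_left1)
  have k: "(x+1) * b^2 / x \<ge> 0" using x0 by simp
  have "(x+1) * u * b^2 / x = ((x+1) * b^2 / x) * u" by simp
  also have "\<dots> \<ge> ((x+1) * b^2 / x) * (1 - b)" using mult_left_mono[OF u k] .
  finally have m1: "(x+1) * u * b^2 / x \<ge> ((x+1) * b^2 / x) * (1 - b)" .
  have "((x+1) * b^2 / x) * (1 - b) - b^2 = (b^2 / x) * (1 - b * x - b)"
    using x0 by (simp add: field_simps power2_eq_square)
  moreover have "(b^2 / x) * (1 - b * x - b) \<ge> (b^2 / x) * (1/2)"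
    using b bl x0 by (intro mult_left_mono) auto
  ultimately have M: "(x+1) * u * b^2 / x - 2 * c \<ge> (b^2 / x) * (1/2)" using m1 c by linarith
  have Mpos: "(b^2 / x) * (1/2) > 0" using b x0 by simp
  have gM: "g * ((x+1) * u * b^2 / x - 2 * c) \<ge> (x+1) * u * b^2 / x - 2 * c"
    using mult_right_mono[OF g, of "(x+1) * u * b^2 / x - 2 * c"] M Mpos by simp
  have "c^2 \<le> (b^2/2)^2" using c by (intro power_mono) auto
  then have "(x+1) * c^2 \<le> (x+1) * (b^2/2)^2" using x0 by (intro mult_left_mono) auto
  also have "(x+1) * (b^2/2)^2 = (b^2 / x) * (((b*x)^2 + b * (b*x)) / 4)"
    using x0 by (simp add: field_simps power2_eq_square)
  also have "\<dots> \<le> (b^2 / x) * (1/8)"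
  proof (intro mult_left_mono)
    have "(b*x)^2 \<le> (1/4)^2" using b x0 by (intro power_mono) auto
    moreover have "b * (b*x) \<le> (1/4) * (1/4)" using b x0 bl by (intro mult_mono) auto
    ultimately show "((b*x)^2 + b * (b*x)) / 4 \<le> 1/8" by (simp add: power2_eq_square)
  qed (use x0 in simp)
  finally have "(x+1) * c^2 \<le> (b^2 / x) * (1/8)" .
  then show ?thesis using lin_aux[OF _ gM M Mpos] by blast
qed

lemma concave_core:
  fixes x b u c g :: real
  assumes x: "x \<ge> 1" and u: "u \<ge> 0" "u * (1 + b + b^2) < 1" and c: "c = 1 - u * (1 + b)"
    and g: "g > 0"
  shows "g * ((x+1) * u * b^2 / x - 2 * c) - (x+1) * c^2 < 0"
proof -
  have x0: "x > 0" using x by simp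
  have "(x+1) / x \<le> 2" using x x0 by (simp add: field_simps)
  then have "((x+1) / x) * (u * b^2) \<le> 2 * (u * b^2)" using u by (intro mult_right_mono) auto
  then have "(x+1) * u * b^2 / x \<le> 2 * (u * b^2)" by (simp add: field_simps)
  then have M: "(x+1) * u * b^2 / x - 2 * c < 0" using u c by (simp add: algebra_simps)
  have "g * ((x+1) * u * b^2 / x - 2 * c) < 0" using M g by (simp add: mult_pos_neg)
  moreover have "(x+1) * c^2 \<ge> 0" using x0 by simp
  ultimately show ?thesis by linarith
qed

lemma sc_aux:
  fixes F Fd :: "real \<Rightarrow> real"
  assumes d1: "\<And>x. l \<le> x \<Longrightarrow> x \<le> r \<Longrightarrow> (F has_real_derivative Fd x) (at x)"
    and inc: "\<And>x y. l \<le> x \<Longrightarrow> x < y \<Longrightarrow> y \<le> r \<Longrightarrow> Fd x < Fd y"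
    and xy: "l \<le> x" "x < y" "y \<le> r" and t: "0 < t" "t < 1"
  shows "F ((1 - t) * x + t * y) < (1 - t) * F x + t * F y"
proof -
  define z where "z = (1 - t) * x + t * y"
  have e1: "z - x = t * (y - x)" "y - z = (1 - t) * (y - x)" unfolding z_def by algebra+
  have "t * (y - x) > 0" using t xy by simp
  then have xz: "x < z" using e1(1) by linarith
  have "(1 - t) * (y - x) > 0" using t xy by simp
  then have zy: "z < y" using e1(2) by linarith
  have dxz: "(F has_real_derivative Fd w) (at w)" if "x \<le> w" "w \<le> z" for w
    by (rule d1) (use that xy xz zy in linarith)+
  have dzy: "(F has_real_derivative Fd w) (at w)" if "z \<le> w" "w \<le> y" for w
    by (rule d1) (use that xy xz zy in linarith)+
  obtain p where p: "x < p" "p < z" "F z - F x = (z - x) * Fd p"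
    using MVT2[OF xz dxz] by blast
  obtain q where q: "z < q" "q < y" "F y - F z = (y - z) * Fd q"
    using MVT2[OF zy dzy] by blast
  have "l \<le> p" "p < q" "q \<le> r" using p q xy by linarith+
  then have lt: "Fd p < Fd q" by (rule inc)
  have eq: "(1 - t) * F x + t * F y - F z = t * (1 - t) * (y - x) * (Fd q - Fd p)"
  proof -
    have "(1 - t) * F x + t * F y - F z = t * (F y - F z) - (1 - t) * (F z - F x)"
      by algebra
    also have "\<dots> = t * (1 - t) * (y - x) * (Fd q - Fd p)" unfolding p(3) q(3) e1 by algebra
    finally show ?thesis .
  qed
  have "t * (1 - t) * (y - x) * (Fd q - Fd p) > 0" using t xy lt by simp
  then have "(1 - t) * F x + t * F y - F z > 0" using eq by linarith
  then have "F z < (1 - t) * F x + t * F y" by linarith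
  then show ?thesis unfolding z_def .
qed

lemma strict_convex_from_d2:
  fixes F Fd Fdd :: "real \<Rightarrow> real"
  assumes d1: "\<And>x. l \<le> x \<Longrightarrow> x \<le> r \<Longrightarrow> (F has_real_derivative Fd x) (at x)"
    and d2: "\<And>x. l \<le> x \<Longrightarrow> x \<le> r \<Longrightarrow> (Fd has_real_derivative Fdd x) (at x)"
    and pos: "\<And>x. l \<le> x \<Longrightarrow> x \<le> r \<Longrightarrow> Fdd x > 0"
  shows "strict_convex_on {l..r} F"
proof -
  have inc: "Fd x < Fd y" if xy: "l \<le> x" "x < y" "y \<le> r" for x y
  proof (rule DERIV_pos_imp_increasing[OF xy(2)])
    fix w assume w: "x \<le> w" "w \<le> y"
    have lw: "l \<le> w" "w \<le> r" using w xy by linarith+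
    show "\<exists>d. (Fd has_real_derivative d) (at w) \<and> 0 < d"
      using d2[OF lw] pos[OF lw] by blast
  qed
  have cvx: "convex {l..r}" by simp
  show ?thesis unfolding strict_convex_on_def
  proof (intro conjI ballI allI impI cvx)
    fix x y t :: real assume x: "x \<in> {l..r}" and y: "y \<in> {l..r}" and h: "x \<noteq> y \<and> 0 < t \<and> t < 1"
    have xb: "l \<le> x" "x \<le> r" using x by simp_all
    have yb: "l \<le> y" "y \<le> r" using y by simp_all
    have t0: "0 < t" and t1: "t < 1" using h by simp_all
    show "F ((1 - t) * x + t * y) < (1 - t) * F x + t * F y"
    proof (cases "x < y")
      case True then show ?thesis using sc_aux[OF d1 inc xb(1) True yb(2) t0 t1] by blast
    next
      case False
      then have yx: "y < x" using h by auto
      have "0 < 1 - t" "1 - t < 1" using t0 t1 by simp_all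
      then have "F ((1 - (1-t)) * y + (1-t) * x) < (1 - (1-t)) * F y + (1-t) * F x"
        using sc_aux[OF d1 inc yb(1) yx xb(2)] by blast
      then show ?thesis by (simp add: algebra_simps)
    qed
  qed
qed

definition gg :: "nat \<Rightarrow> real \<Rightarrow> real \<Rightarrow> real" where
  "gg n a x = real n - x - 1 + exp a + x * exp (- a / x)"
definition g1 :: "real \<Rightarrow> real \<Rightarrow> real" where
  "g1 a x = exp (- a / x) * (1 + a / x) - 1"
definition g2 :: "real \<Rightarrow> real \<Rightarrow> real" where
  "g2 a x = exp (- a / x) * a^2 / x^3"
definition FF1 :: "nat \<Rightarrow> real \<Rightarrow> real \<Rightarrow> real" where
  "FF1 n a x = ln (gg n a x) + (x+1) * g1 a x / gg n a x"
definition FF2 :: "nat \<Rightarrow> real \<Rightarrow> real \<Rightarrow> real" where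
  "FF2 n a x = 2 * g1 a x / gg n a x + (x+1) * (g2 a x * gg n a x - (g1 a x)^2) / (gg n a x)^2"

lemma d_gg: assumes "x \<noteq> 0" shows "(gg n a has_real_derivative g1 a x) (at x)"
proof -
  have "((\<lambda>x. real n - x - 1 + exp a + x * exp (- a / x)) has_real_derivative g1 a x) (at x)"
    unfolding g1_def using assms
    by (auto intro!: derivative_eq_intros simp: field_simps power2_eq_square)
  then show ?thesis unfolding gg_def[abs_def] .
qed

lemma d_g1: assumes "x \<noteq> 0" shows "(g1 a has_real_derivative g2 a x) (at x)"
proof -
  have "((\<lambda>x. exp (- a / x) * (1 + a / x) - 1) has_real_derivative g2 a x) (at x)"
    unfolding g2_def using assms
    by (auto intro!: derivative_eq_intros simp: field_simps power2_eq_square power3_eq_cube)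
  then show ?thesis unfolding g1_def[abs_def] .
qed

lemma d_F:
  assumes x: "x \<noteq> 0" and gp: "gg n a x > 0"
  shows "((\<lambda>x. (x+1) * ln (gg n a x)) has_real_derivative FF1 n a x) (at x)"
proof -
  have dl: "((\<lambda>x. ln (gg n a x)) has_real_derivative (1 / gg n a x) * g1 a x) (at x)"
    using DERIV_chain2[OF DERIV_ln_divide[OF gp] d_gg[OF x]] .
  have d1: "((\<lambda>x. x + 1) has_real_derivative 1) (at x)"
    using DERIV_add[OF DERIV_ident DERIV_const[of 1]] by simp
  show ?thesis
    using DERIV_mult[OF d1 dl] gp unfolding FF1_def by (simp add: field_simps)
qed

lemma d_F1:
  assumes x: "x \<noteq> 0" and gp: "gg n a x > 0"
  shows "(FF1 n a has_real_derivative FF2 n a x) (at x)"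
proof -
  have dl: "((\<lambda>x. ln (gg n a x)) has_real_derivative (1 / gg n a x) * g1 a x) (at x)"
    using DERIV_chain2[OF DERIV_ln_divide[OF gp] d_gg[OF x]] .
  have d1: "((\<lambda>x. x + 1) has_real_derivative 1) (at x)"
    using DERIV_add[OF DERIV_ident DERIV_const[of 1]] by simp
  have dm: "((\<lambda>x. (x + 1) * g1 a x) has_real_derivative 1 * g1 a x + g2 a x * (x + 1)) (at x)"
    using DERIV_mult[OF d1 d_g1[OF x]] .
  have dd: "((\<lambda>x. (x + 1) * g1 a x / gg n a x) has_real_derivative
      ((1 * g1 a x + g2 a x * (x + 1)) * gg n a x - (x + 1) * g1 a x * g1 a x) / (gg n a x * gg n a x)) (at x)"
    using DERIV_divide[OF dm d_gg[OF x]] gp by simp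
  have "(FF1 n a has_real_derivative (1 / gg n a x) * g1 a x +
      ((1 * g1 a x + g2 a x * (x + 1)) * gg n a x - (x + 1) * g1 a x * g1 a x) / (gg n a x * gg n a x)) (at x)"
    unfolding FF1_def[abs_def] using DERIV_add[OF dl dd] .
  then show ?thesis
    by (rule DERIV_cong) (use gp in \<open>simp add: FF2_def field_simps power2_eq_square\<close>)
qed


lemma gg_ge1:
  assumes "0 \<le> a" "0 \<le> x" "x \<le> real n - 1"
  shows "gg n a x \<ge> 1"
proof -
  have "exp a \<ge> 1" using assms by simp
  moreover have "x * exp (- a / x) \<ge> 0" using assms by simp
  ultimately show ?thesis unfolding gg_def using assms by linarith
qed

lemma FF2_eq:
  assumes x: "x > 0" and gp: "gg n a x > 0"
  shows "FF2 n a x = (gg n a x * ((x+1) * exp (- (a/x)) * (a/x)^2 / x - 2 * (1 - exp (- (a/x)) * (1 + a/x)))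
     - (x+1) * (1 - exp (- (a/x)) * (1 + a/x))^2) / (gg n a x)^2"
  using x gp unfolding FF2_def g1_def g2_def
  by (simp add: field_simps power2_eq_square power3_eq_cube)

lemma f_fun_eq: "f_fun n \<tau> = (\<lambda>x. (x+1) * ln (gg n (1/\<tau>) x))"
  unfolding f_fun_def gg_def by (simp add: field_simps)

theorem lemma15:
  fixes n :: nat
  assumes "n > 1"
  shows "\<exists>\<tau>m \<tau>p :: real. 0 < \<tau>m \<and> \<tau>m < \<tau>p \<and>
           (\<forall>\<tau>. 0 < \<tau> \<and> \<tau> < \<tau>m \<longrightarrow> strict_concave_on {1 .. real n - 1} (f_fun n \<tau>)) \<and>
           (\<forall>\<tau>. \<tau> > \<tau>p \<longrightarrow> strict_convex_on {1 .. real n - 1} (f_fun n \<tau>))"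
proof -
  have n1: "real n - 1 \<ge> 1" using assms by simp
  define tm :: real where "tm = 1 / (4 * (real n - 1))"
  have D: "4 \<le> 4 * (real n - 1)" using n1 by (simp add: algebra_simps)
  have tm0: "0 < tm" unfolding tm_def using D by simp
  have "tm \<le> 1 / 4" unfolding tm_def using D by (intro divide_left_mono) auto
  then have tm4: "tm < 4" by simp
  have conc: "strict_concave_on {1 .. real n - 1} (f_fun n \<tau>)" if t: "0 < \<tau>" "\<tau> < tm" for \<tau>
  proof -
    define a where "a = 1 / \<tau>"
    have D: "0 < 4 * (real n - 1)" using n1 by (simp add: algebra_simps)
    have "\<tau> * (4 * (real n - 1)) < 1" using t(2) pos_less_divide_eq[OF D, of \<tau> 1] unfolding tm_def by simp
    then have a4: "a > 4 * (real n - 1)" unfolding a_def using pos_less_divide_eq[OF t(1), of "4 * (real n - 1)" 1]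
      by (simp add: mult.commute)
    have a0: "a \<ge> 0" unfolding a_def using t(1) by simp
    have gp: "gg n a x > 0" if "1 \<le> x" "x \<le> real n - 1" for x
      using gg_ge1[OF a0, of x n] that by simp
    show ?thesis unfolding strict_concave_on_def f_fun_eq a_def[symmetric]
    proof (rule strict_convex_from_d2[where Fd = "\<lambda>x. - FF1 n a x" and Fdd = "\<lambda>x. - FF2 n a x"])
      fix x assume x: "1 \<le> x" "x \<le> real n - 1"
      show "((\<lambda>x. - ((x + 1) * ln (gg n a x))) has_real_derivative - FF1 n a x) (at x)"
        using DERIV_minus[OF d_F[OF _ gp[OF x]]] x by simp
      show "((\<lambda>x. - FF1 n a x) has_real_derivative - FF2 n a x) (at x)"
        using DERIV_minus[OF d_F1[OF _ gp[OF x]]] x by simp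
      have x0: "x > 0" using x by simp
      have "4 * x \<le> 4 * (real n - 1)" using x by simp
      then have "a \<ge> 4 * x" using a4 by linarith
      then have b4: "4 \<le> a / x" using pos_le_divide_eq[OF x0, of 4 a] by simp
      have u0: "0 \<le> exp (- (a / x))" by simp
      have "gg n a x * ((x+1) * exp (- (a/x)) * (a/x)^2 / x - 2 * (1 - exp (- (a/x)) * (1 + a/x)))
          - (x+1) * (1 - exp (- (a/x)) * (1 + a/x))^2 < 0"
        by (rule concave_core[OF x(1) u0 big_b[OF b4] refl gp[OF x]])
      then have "FF2 n a x < 0" unfolding FF2_eq[OF x0 gp[OF x]]
        by (rule divide_neg_pos) (use gp[OF x] in simp)
      then show "- FF2 n a x > 0" by simp
    qed
  qed
  have conv: "strict_convex_on {1 .. real n - 1} (f_fun n \<tau>)" if t: "\<tau> > 4" for \<tau>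
  proof -
    define a where "a = 1 / \<tau>"
    have a0: "a > 0" and a4: "a \<le> 1/4" unfolding a_def using t by (simp_all add: field_simps)
    have gp1: "gg n a x \<ge> 1" if "1 \<le> x" "x \<le> real n - 1" for x
      using gg_ge1[of a x n] a0 that by simp
    have gp: "gg n a x > 0" if "1 \<le> x" "x \<le> real n - 1" for x
      using gp1[OF that] by simp
    show ?thesis unfolding f_fun_eq a_def[symmetric]
    proof (rule strict_convex_from_d2[where Fd = "\<lambda>x. FF1 n a x" and Fdd = "\<lambda>x. FF2 n a x"])
      fix x assume x: "1 \<le> x" "x \<le> real n - 1"
      show "((\<lambda>x. ((x + 1) * ln (gg n a x))) has_real_derivative FF1 n a x) (at x)"
        using d_F[OF _ gp[OF x]] x by simp
      show "(FF1 n a has_real_derivative FF2 n a x) (at x)"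
        using d_F1[OF _ gp[OF x]] x by simp
      have x0: "x > 0" using x by simp
      have b0: "a / x > 0" using a0 x0 by simp
      have bx: "a / x * x \<le> 1/4" using a4 x0 by simp
      have "a / x \<le> a" using a0 x by (simp add: field_simps)
      then have bl: "a / x \<le> 1/4" using a4 by linarith
      have u: "exp (- (a/x)) \<ge> 1 - a/x" using exp_ge_add_one_self[of "- (a/x)"] by simp
      have "gg n a x * ((x+1) * exp (- (a/x)) * (a/x)^2 / x - 2 * (1 - exp (- (a/x)) * (1 + a/x)))
          - (x+1) * (1 - exp (- (a/x)) * (1 + a/x))^2 > 0"
        by (rule convex_core[OF x(1) b0 bx u c_nonneg c_upper[OF b0 bl] gp1[OF x]])
      then show "FF2 n a x > 0" unfolding FF2_eq[OF x0 gp[OF x]]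
        by (rule divide_pos_pos) (use gp[OF x] in simp)
    qed
  qed
  show ?thesis
  proof (rule exI[of _ tm], rule exI[of _ 4], intro conjI allI impI)
    show "0 < tm" by (rule tm0)
    show "tm < 4" by (rule tm4)
    fix \<tau> :: real
    show "strict_concave_on {1 .. real n - 1} (f_fun n \<tau>)" if "0 < \<tau> \<and> \<tau> < tm"
      using conc that by blast
    show "strict_convex_on {1 .. real n - 1} (f_fun n \<tau>)" if "\<tau> > 4"
      using conv that by blast
  qed
qed

end
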